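(* Let $r\ge1$ and let $\mathcal{R}$ be a Rouquier block of $\mathcal{A}_e^r$ which is not a core block. Let $(\boldsymbol\lambda,\mathbf{s})\in\mathcal{R}$ and write $\eta(\lambda^{(k)},s_k)=(\boldsymbol\rho^k,\mathbf{t}^k)$ for $1\le k\le r$. Then for all $1\le k\le r$ and all $0\le i<i'\le e-1$ we have $t^k_{i'}-t^k_i\ge-1$.
   Context: Fix an integer $e\ge 2$. A partition is a weakly decreasing sequence $\lambda=(\lambda_1,\lambda_2,\dots)$ of non-negative integers with finite sum $|\lambda|$; $\Lambda$ denotes the set of partitions and $\Lambda^{(m)}$ the set of $m$-multipartitions, i.e. $m$-tuples $\boldsymbol\lambda=(\lambda^{(1)},\dots,\lambda^{(m)})$ of partitions, with $|\boldsymbol\lambda|=\sum_k|\lambda^{(k)}|$. A $\beta$-set is a subset $B\subseteq\mathbb{Z}$ containing all sufficiently small integers and no sufficiently large ones. For $\lambda\in\Lambda$ and $s\in\mathbb{Z}$ set $B_s(\lambda)=\{\lambda_i-i+s : i\ge 1\}$; every $\beta$-set equals $B_s(\lambda)$ for a unique pair $(\lambda,s)$. Let $\mathcal{A}_e=\Lambda\times\mathbb{Z}$ (abacus configurations with $e$ runners) and $\mathcal{A}_e^m=\Lambda^{(m)}\times\mathbb{Z}^m$. Blocks: for $(\boldsymbol\lambda,\mathbf{s})\in\mathcal{A}_e^m$, its $e$-residue multiset is the multiset of the values $s_k+y-x \bmod e$ over all nodes $(x,y,k)$ with $x\ge1$, $1\le y\le\lambda^{(k)}_x$, $1\le k\le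 m$. Define $(\boldsymbol\lambda,\mathbf{s})\approx_e(\boldsymbol\mu,\mathbf{s}')$ iff $\mathbf{s}=\mathbf{s}'$, $|\boldsymbol\lambda|=|\boldsymbol\mu|$ and the $e$-residue multisets coincide. Its equivalence classes are called blocks. The map $\eta$: for $(\lambda,s)\in\mathcal{A}_e$ with $B=B_s(\lambda)$ and $0\le i<e$, the set $C_i=\{(b-i)/e : b\in B,\ b\equiv i \bmod e\}$ is a $\beta$-set, so $C_i=B_{t_i}(\rho_i)$ for a unique $(\rho_i,t_i)\in\Lambda\times\mathbb{Z}$; set $\eta(\lambda,s)=((\rho_0,\dots,\rho_{e-1}),(t_0,\dots,t_{e-1}))$. The $e$-weight of $\lambda$ is $\mathrm{wt}(\lambda)=\sum_i|\rho_i|$ (it is positive iff $\lambda$ has a removable $e$-rim hook). Rouquier: $(\lambda,s)\in\mathcal{A}_e$ with $\eta(\lambda,s)=(\boldsymbol\rho,\mathbf{t})$ is a Rouquier partition if $\mathrm{wt}(\lambda)\le t_{i+1}-t_i+1$ for all $0\le i<e-1$. $(\boldsymbol\lambda,\mathbf{s})\in\mathcal{A}_e^r$ is a Rouquier multipartition if $(\lambda^{(k)},s_k)$ is a Rouquier partition for every $1\le k\le r$. A block of $\mathcal{A}_e^r$ is a Rouquier block if all its elements are Rouquier multipartitions. A block $\mathcal{R}$ of $\mathcal{A}_e^r$ is a core block if for every $(\boldsymbol\lambda,\mathbf{s})\in\mathcal{R}$ every component $\lambda^{(k)}$ has $e$-weight $0$ (no removable $e$-rim hooks). *)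

theory Defs
  imports Main "HOL-Library.Multiset"
begin

definition is_partition :: "nat list \<Rightarrow> bool" where
  "is_partition lam \<longleftrightarrow> sorted_wrt (\<ge>) lam \<and> 0 \<notin> set lam"

definition part :: "nat list \<Rightarrow> nat \<Rightarrow> nat" where
  "part lam i = (if 1 \<le> i \<and> i \<le> length lam then lam ! (i - 1) else 0)"

definition psize :: "nat list \<Rightarrow> nat" where
  "psize lam = sum_list lam"

definition beta_set :: "nat list \<Rightarrow> int \<Rightarrow> int set" where
  "beta_set lam s = {int (part lam i) - int i + s | i. i \<ge> 1}"

definition runner_set :: "nat \<Rightarrow> int set \<Rightarrow> nat \<Rightarrow> int set" where
  "runner_set e B i = {(b - int i) div int e | b. b \<in> B \<and> b mod int e = int i}"

text \<open>eta(lambda,s) = ((rho_0,...,rho_{e-1}),(t_0,...,t_{e-1})), where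
  (rho_i,t_i) is the unique pair with B_{t_i}(rho_i) = C_i.\<close>

definition eta_pair :: "nat \<Rightarrow> nat list \<Rightarrow> int \<Rightarrow> nat \<Rightarrow> nat list \<times> int" where
  "eta_pair e lam s i = (THE (rho, t). is_partition rho \<and>
        beta_set rho t = runner_set e (beta_set lam s) i)"

definition eta_rho :: "nat \<Rightarrow> nat list \<Rightarrow> int \<Rightarrow> nat \<Rightarrow> nat list" where
  "eta_rho e lam s i = fst (eta_pair e lam s i)"

definition eta_t :: "nat \<Rightarrow> nat list \<Rightarrow> int \<Rightarrow> nat \<Rightarrow> int" where
  "eta_t e lam s i = snd (eta_pair e lam s i)"

definition weight :: "nat \<Rightarrow> nat list \<Rightarrow> int \<Rightarrow> nat" where
  "weight e lam s = (\<Sum>i<e. psize (eta_rho e lam s i))"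

definition rouquier_partition :: "nat \<Rightarrow> nat list \<Rightarrow> int \<Rightarrow> bool" where
  "rouquier_partition e lam s \<longleftrightarrow>
     (\<forall>i. i + 1 < e \<longrightarrow> int (weight e lam s) \<le> eta_t e lam s (i+1) - eta_t e lam s i + 1)"

text \<open>Multipartition configurations A_e^r: pairs of a list of r partitions and a
  list of r charges (components indexed 0..r-1).\<close>

definition configs :: "nat \<Rightarrow> (nat list list \<times> int list) set" where
  "configs r = {(lams, s). length lams = r \<and> length s = r \<and> (\<forall>l\<in>set lams. is_partition l)}"

definition msize :: "nat list list \<Rightarrow> nat" where
  "msize lams = (\<Sum>k<length lams. psize (lams ! k))"

definition residues :: "nat \<Rightarrow> nat list list \<Rightarrow> int list \<Rightarrow> int multiset" where
  "residues e lams s =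
     (\<Sum>k<length lams. \<Sum>x\<in>{1..length (lams ! k)}. \<Sum>y\<in>{1..part (lams ! k) x}.
        {# (s ! k + int y - int x) mod int e #})"

definition block_rel :: "nat \<Rightarrow> nat \<Rightarrow> ((nat list list \<times> int list) \<times> (nat list list \<times> int list)) set" where
  "block_rel e r = {((lams, s), (mus, s')). (lams, s) \<in> configs r \<and> (mus, s') \<in> configs r \<and>
       s = s' \<and> msize lams = msize mus \<and> residues e lams s = residues e mus s'}"

definition blocks :: "nat \<Rightarrow> nat \<Rightarrow> (nat list list \<times> int list) set set" where
  "blocks e r = configs r // block_rel e r"

definition rouquier_multipartition :: "nat \<Rightarrow> nat list list \<Rightarrow> int list \<Rightarrow> bool" where
  "rouquier_multipartition e lams s \<longleftrightarrow>
     (\<forall>k<length lams. rouquier_partition e (lams ! k) (s ! k))"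

definition rouquier_block :: "nat \<Rightarrow> (nat list list \<times> int list) set \<Rightarrow> bool" where
  "rouquier_block e R \<longleftrightarrow> (\<forall>(lams, s)\<in>R. rouquier_multipartition e lams s)"

definition core_block :: "nat \<Rightarrow> (nat list list \<times> int list) set \<Rightarrow> bool" where
  "core_block e R \<longleftrightarrow> (\<forall>(lams, s)\<in>R. \<forall>k<length lams. weight e (lams ! k) (s ! k) = 0)"

end

theory Submission
  imports Defs
begin


lemma part_zero: "length lam < j \<Longrightarrow> part lam j = 0"
  by (simp add: part_def)

lemma part_mono:
  assumes "is_partition lam" "1 \<le> i" "i \<le> j"
  shows "part lam j \<le> part lam i"
proof (cases "j \<le> length lam")
  case True
  show ?thesis
  proof (cases "i = j")
    case False
    hence "i - 1 < j - 1" using assms by simp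
    moreover have "j - 1 < length lam" using True assms by simp
    ultimately have "lam ! (j-1) \<le> lam ! (i-1)"
      using assms(1) unfolding is_partition_def using sorted_wrt_nth_less by fastforce
    thus ?thesis using True assms by (simp add: part_def)
  qed simp
next
  case False thus ?thesis by (simp add: part_def)
qed

lemma part_pos:
  assumes "is_partition lam" "1 \<le> j" "j \<le> length lam"
  shows "part lam j > 0"
proof -
  have "lam ! (j-1) \<in> set lam" using assms by simp
  hence "lam ! (j-1) \<noteq> 0" using assms(1) unfolding is_partition_def by metis
  thus ?thesis using assms by (simp add: part_def)
qed

lemma part_eq_imp:
  assumes "is_partition l1" "is_partition l2" "\<And>j. 1 \<le> j \<Longrightarrow> part l1 j = part l2 j"
  shows "l1 = l2"
proof -
  have len: "length l1 = length l2"
  proof (rule ccontr)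
    assume "length l1 \<noteq> length l2"
    then consider "length l1 < length l2" | "length l2 < length l1" by linarith
    thus False
    proof cases
      case 1
      hence "part l2 (Suc (length l1)) > 0" using part_pos[OF assms(2)] by simp
      moreover have "part l1 (Suc (length l1)) = 0" by (simp add: part_def)
      ultimately show False using assms(3)[of "Suc (length l1)"] by simp
    next
      case 2
      hence "part l1 (Suc (length l2)) > 0" using part_pos[OF assms(1)] by simp
      moreover have "part l2 (Suc (length l2)) = 0" by (simp add: part_def)
      ultimately show False using assms(3)[of "Suc (length l2)"] by simp
    qed
  qed
  show ?thesis
  proof (rule nth_equalityI[OF len])
    fix i assume "i < length l1"
    thus "l1 ! i = l2 ! i" using assms(3)[of "Suc i"] len by (simp add: part_def)
  qed
qed

lemma psize_sum:
  assumes "length lam \<le> L"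
  shows "psize lam = (\<Sum>j\<in>{1..L}. part lam j)"
proof -
  have "psize lam = (\<Sum>i<length lam. lam ! i)"
    by (simp add: psize_def sum_list_sum_nth atLeast0LessThan)
  also have "\<dots> = (\<Sum>j\<in>{1..length lam}. part lam j)"
  proof (rule sum.reindex_bij_witness[where i="\<lambda>j. j - 1" and j="Suc"])
  qed (auto simp: part_def)
  also have "\<dots> = (\<Sum>j\<in>{1..L}. part lam j)"
    by (rule sum.mono_neutral_left) (use assms in \<open>auto simp: part_def\<close>)
  finally show ?thesis .
qed

lemma part_of_fun:
  fixes f :: "nat \<Rightarrow> nat"
  assumes "\<And>j. 1 \<le> j \<Longrightarrow> f (Suc j) \<le> f j" "\<And>j. m < j \<Longrightarrow> f j = 0"
  shows "\<exists>lam. is_partition lam \<and> (\<forall>j\<ge>1. part lam j = f j) \<and> length lam \<le> m"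
  using assms(2)
proof (induction m)
  case 0
  show ?case by (rule exI[of _ "[]"]) (use 0 in \<open>auto simp: is_partition_def part_def\<close>)
next
  case (Suc m)
  show ?case
  proof (cases "f (Suc m) = 0")
    case True
    hence "\<And>j. m < j \<Longrightarrow> f j = 0" using Suc.prems by (metis Suc_lessI)
    from Suc.IH[OF this] show ?thesis by (meson le_Suc_eq)
  next
    case False
    have mono: "\<And>i j. 1 \<le> i \<Longrightarrow> i \<le> j \<Longrightarrow> f j \<le> f i"
    proof -
      fix i j :: nat assume "1 \<le> i" "i \<le> j"
      show "f j \<le> f i" using \<open>i \<le> j\<close>
      proof (induction j rule: dec_induct)
        case (step n) thus ?case using assms(1)[of n] \<open>1 \<le> i\<close> by simp
      qed simp
    qed
    define lam where "lam = map f [1..<Suc (Suc m)]"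
    have "sorted_wrt (\<ge>) lam"
      unfolding lam_def sorted_wrt_map
      by (rule sorted_wrt_mono_rel[OF _ sorted_wrt_upt]) (auto intro: mono)
    moreover have "0 \<notin> set lam"
    proof
      assume "0 \<in> set lam"
      then obtain j where "j \<in> set [1..<Suc (Suc m)]" "f j = 0" unfolding lam_def
        by (metis (no_types, lifting) imageE list.set_map)
      hence "j \<in> {1..Suc m}" "f j = 0" by auto
      hence "f (Suc m) \<le> 0" using mono[of j "Suc m"] by auto
      thus False using False by simp
    qed
    moreover have "\<forall>j\<ge>1. part lam j = f j"
    proof (intro allI impI)
      fix j :: nat assume "1 \<le> j"
      show "part lam j = f j"
      proof (cases "j \<le> Suc m")
        case True
        hence "j - 1 < Suc m" using \<open>1 \<le> j\<close> by simp
        hence "lam ! (j - 1) = f (1 + (j - 1))" unfolding lam_def by (simp del: upt_Suc)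
        also have "1 + (j - 1) = j" using \<open>1 \<le> j\<close> by simp
        finally show ?thesis using True \<open>1 \<le> j\<close> unfolding part_def lam_def by (simp del: upt_Suc)
      next
        case False thus ?thesis using Suc.prems unfolding lam_def part_def by simp
      qed
    qed
    ultimately show ?thesis unfolding is_partition_def by (intro exI[of _ lam]) (simp add: lam_def)
  qed
qed

definition bf :: "nat list \<Rightarrow> int \<Rightarrow> nat \<Rightarrow> int" where
  "bf lam s x = int (part lam x) - int x + s"

lemma bf_strict:
  assumes "is_partition lam" "1 \<le> x" "x < y"
  shows "bf lam s y < bf lam s x"
  using part_mono[OF assms(1,2), of y] assms(3) unfolding bf_def by simp

lemma bf_ge: "x \<le> L \<Longrightarrow> bf lam s x \<ge> s - int L"
  unfolding bf_def by simp

lemma bf_inj: "is_partition lam \<Longrightarrow> inj_on (bf lam s) {1..L}"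
  unfolding inj_on_def
  by (metis atLeastAtMost_iff bf_strict linorder_neqE_nat order_less_irrefl)

lemma beta_rep:
  assumes "is_partition lam" "length lam \<le> L"
  shows "beta_set lam s = bf lam s ` {1..L} \<union> {..<s - int L}"
proof
  show "beta_set lam s \<subseteq> bf lam s ` {1..L} \<union> {..<s - int L}"
  proof
    fix b assume "b \<in> beta_set lam s"
    then obtain i where i: "i \<ge> 1" "b = int (part lam i) - int i + s" unfolding beta_set_def by auto
    show "b \<in> bf lam s ` {1..L} \<union> {..<s - int L}"
    proof (cases "i \<le> L")
      case True thus ?thesis using i unfolding bf_def by auto
    next
      case False thus ?thesis using i assms(2) by (simp add: part_def)
    qed
  qed
next
  show "bf lam s ` {1..L} \<union> {..<s - int L} \<subseteq> beta_set lam s"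
  proof
    fix b assume "b \<in> bf lam s ` {1..L} \<union> {..<s - int L}"
    then consider (a) x where "x \<in> {1..L}" "b = bf lam s x" | (b) "b < s - int L" by auto
    thus "b \<in> beta_set lam s"
    proof cases
      case a thus ?thesis unfolding beta_set_def bf_def by auto
    next
      case b
      define i where "i = nat (s - b)"
      have "i > L" "int i = s - b" using b unfolding i_def by auto
      hence "part lam i = 0" using assms(2) by (simp add: part_def)
      hence "b = int (part lam i) - int i + s" using \<open>int i = s - b\<close> by simp
      thus ?thesis unfolding beta_set_def using \<open>i > L\<close> by auto
    qed
  qed
qed

lemma beta_top:
  assumes "is_partition lam" "length lam \<le> L"
  shows "beta_set lam s \<inter> {s - int L..} = bf lam s ` {1..L}"
proof -
  have "\<And>x. x \<in> {1..L} \<Longrightarrow> bf lam s x \<ge> s - int L" using bf_ge by auto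
  thus ?thesis using beta_rep[OF assms, of s] by auto
qed

lemma beta_top_card:
  assumes "is_partition lam" "length lam \<le> L"
  shows "card (beta_set lam s \<inter> {s - int L..}) = L"
  using beta_top[OF assms] card_image[OF bf_inj[OF assms(1)]] by simp

lemma beta_charge:
  assumes "is_partition lam" "z \<le> s - int (length lam)"
  shows "s = z + int (card (beta_set lam s \<inter> {z..}))"
proof -
  define L where "L = nat (s - z)"
  have "length lam \<le> L" "s - int L = z" using assms unfolding L_def by auto
  thus ?thesis using beta_top_card[OF assms(1), of L s] by simp
qed

lemma strict_dec_image_eq:
  fixes f g :: "nat \<Rightarrow> int"
  assumes "\<And>x y. 1 \<le> x \<Longrightarrow> x < y \<Longrightarrow> f y < f x"
    "\<And>x y. 1 \<le> x \<Longrightarrow> x < y \<Longrightarrow> g y < g x"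
    "f ` {1..L} = g ` {1..L}"
  shows "\<forall>x\<in>{1..L}. f x = g x"
  using assms(3)
proof (induction L)
  case 0 thus ?case by simp
next
  case (Suc L)
  have fle: "f (Suc L) \<le> f x" if "x \<in> {1..Suc L}" for x
    using that assms(1)[of x "Suc L"] by (cases "x = Suc L") auto
  have gle: "g (Suc L) \<le> g x" if "x \<in> {1..Suc L}" for x
    using that assms(2)[of x "Suc L"] by (cases "x = Suc L") auto
  obtain y where y: "y \<in> {1..Suc L}" "f (Suc L) = g y"
    using Suc.prems by (metis atLeastAtMost_iff imageE imageI le_add1 order_refl plus_1_eq_Suc)
  obtain y' where y': "y' \<in> {1..Suc L}" "g (Suc L) = f y'"
    using Suc.prems by (metis atLeastAtMost_iff imageE imageI le_add1 order_refl plus_1_eq_Suc)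
  have eq: "f (Suc L) = g (Suc L)" using y y' fle gle by fastforce
  have "\<And>h :: nat \<Rightarrow> int. (\<And>x y. 1 \<le> x \<Longrightarrow> x < y \<Longrightarrow> h y < h x) \<Longrightarrow>
      h ` {1..L} = h ` {1..Suc L} - {h (Suc L)}"
  proof -
    fix h :: "nat \<Rightarrow> int" assume h: "\<And>x y. 1 \<le> x \<Longrightarrow> x < y \<Longrightarrow> h y < h x"
    have "{1..Suc L} = insert (Suc L) {1..L}" by auto
    moreover have "h (Suc L) \<notin> h ` {1..L}"
      using h by (metis atLeastAtMost_iff imageE le_imp_less_Suc less_irrefl)
    ultimately show "h ` {1..L} = h ` {1..Suc L} - {h (Suc L)}" by auto
  qed
  hence "f ` {1..L} = g ` {1..L}" using assms(1,2) Suc.prems eq by metis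
  from Suc.IH[OF this] eq show ?case by (metis atLeastAtMost_iff le_Suc_eq)
qed

lemma beta_unique:
  assumes "is_partition r1" "is_partition r2" "beta_set r1 t1 = beta_set r2 t2"
  shows "r1 = r2 \<and> t1 = t2"
proof -
  define z where "z = min (t1 - int (length r1)) (t2 - int (length r2))"
  have t: "t1 = t2" using beta_charge[OF assms(1), of z t1] beta_charge[OF assms(2), of z t2] assms(3)
    unfolding z_def by simp
  define L where "L = max (length r1) (length r2)"
  have "bf r1 t1 ` {1..L} = bf r2 t2 ` {1..L}"
    using beta_top[OF assms(1), of L t1] beta_top[OF assms(2), of L t2] assms(3) t unfolding L_def by simp
  hence eq: "\<forall>x\<in>{1..L}. bf r1 t1 x = bf r2 t2 x"
    by (rule strict_dec_image_eq[rotated 2]) (use bf_strict assms in auto)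
  have "\<And>j. 1 \<le> j \<Longrightarrow> part r1 j = part r2 j"
  proof -
    fix j :: nat assume "1 \<le> j"
    show "part r1 j = part r2 j"
    proof (cases "j \<le> L")
      case True thus ?thesis using eq \<open>1 \<le> j\<close> t unfolding bf_def by auto
    next
      case False thus ?thesis unfolding L_def part_def by auto
    qed
  qed
  thus ?thesis using part_eq_imp assms t by blast
qed

lemma gauss2: "2 * (\<Sum>j\<in>{1..m}. int j) = int m * (int m + 1)"
  by (induction m) (auto simp: algebra_simps)

lemma sorted_ge_idx:
  fixes ys :: "int list"
  assumes "sorted_wrt (<) ys" "set ys \<subseteq> {a..}" "k < length ys"
  shows "ys ! k \<ge> a + int k"
  using assms(3)
proof (induction k)
  case 0 thus ?case using assms(2) nth_mem by fastforce
next
  case (Suc k)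
  have "ys ! k < ys ! Suc k" using assms(1) Suc.prems sorted_wrt_nth_less by fastforce
  thus ?case using Suc by simp
qed

lemma beta_exists:
  fixes Y :: "int set" and a :: int
  assumes "finite Y" "Y \<subseteq> {a..}"
  shows "\<exists>rho. is_partition rho \<and> beta_set rho (a + int (card Y)) = Y \<union> {..<a} \<and>
     2 * int (psize rho) = 2 * \<Sum>Y - int (card Y)^2 + int (card Y) - 2 * a * int (card Y)"
proof -
  define ys where "ys = sorted_list_of_set Y"
  define m where "m = card Y"
  define t where "t = a + int m"
  have ssort: "sorted_wrt (<) ys" unfolding ys_def by simp
  have sety: "set ys = Y" unfolding ys_def using assms(1) by simp
  have lenm: "length ys = m" unfolding ys_def m_def by simp
  have dist: "distinct ys" unfolding ys_def by simp
  have ge: "\<And>k. k < m \<Longrightarrow> ys ! k \<ge> a + int k"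
    using sorted_ge_idx[OF ssort] sety assms(2) lenm by auto
  have lt: "\<And>i j. i < j \<Longrightarrow> j < m \<Longrightarrow> ys ! i < ys ! j"
    using ssort lenm sorted_wrt_nth_less by fastforce
  define v where "v j = ys ! (m - j) + int j - t" for j
  have vnn: "v j \<ge> 0" if "1 \<le> j" "j \<le> m" for j
  proof -
    have "ys ! (m - j) \<ge> a + int (m - j)" using ge[of "m - j"] that by simp
    thus ?thesis using that unfolding v_def t_def by simp
  qed
  define f where "f j = (if 1 \<le> j \<and> j \<le> m then nat (v j) else 0)" for j
  have fmono: "\<And>j. 1 \<le> j \<Longrightarrow> f (Suc j) \<le> f j"
  proof -
    fix j :: nat assume j: "1 \<le> j"
    show "f (Suc j) \<le> f j"
    proof (cases "Suc j \<le> m")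
      case True
      have "ys ! (m - Suc j) < ys ! (m - j)" using lt[of "m - Suc j" "m - j"] True j by simp
      hence "v (Suc j) \<le> v j" unfolding v_def by simp
      thus ?thesis unfolding f_def using True j by simp
    next
      case False thus ?thesis unfolding f_def by simp
    qed
  qed
  have fz: "\<And>j. m < j \<Longrightarrow> f j = 0" unfolding f_def by simp
  obtain lam where lam: "is_partition lam" "\<forall>j\<ge>1. part lam j = f j" "length lam \<le> m"
    using part_of_fun[of f m, OF fmono fz] by blast
  have bfv: "\<And>j. j \<in> {1..m} \<Longrightarrow> bf lam t j = ys ! (m - j)"
    using lam(2) vnn unfolding bf_def f_def v_def by auto
  have im1: "(\<lambda>j. m - j) ` {1..m} = {..<m}"
  proof
    show "{..<m} \<subseteq> (\<lambda>j. m - j) ` {1..m}"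
    proof
      fix k assume "k \<in> {..<m}"
      hence "k = m - (m - k)" "m - k \<in> {1..m}" by auto
      thus "k \<in> (\<lambda>j. m - j) ` {1..m}" by blast
    qed
  qed auto
  have img: "(\<lambda>j. ys ! (m - j)) ` {1..m} = Y"
  proof -
    have "(\<lambda>j. ys ! (m - j)) ` {1..m} = (\<lambda>k. ys ! k) ` ((\<lambda>j. m - j) ` {1..m})"
      by (simp add: image_comp)
    also have "\<dots> = set ys" using lenm im1 by (auto simp: set_conv_nth)
    finally show ?thesis using sety by simp
  qed
  have tm: "t - int m = a" unfolding t_def by simp
  have beta: "beta_set lam t = Y \<union> {..<a}"
  proof -
    have "bf lam t ` {1..m} = (\<lambda>j. ys ! (m - j)) ` {1..m}" using bfv by (rule image_cong[OF refl])
    thus ?thesis using beta_rep[OF lam(1) lam(3), of t] img tm by simp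
  qed
  have "int (psize lam) = (\<Sum>j\<in>{1..m}. int (part lam j))"
    using psize_sum[OF lam(3)] by simp
  also have "\<dots> = (\<Sum>j\<in>{1..m}. v j)"
    by (rule sum.cong) (use lam(2) vnn in \<open>auto simp: f_def\<close>)
  also have "\<dots> = (\<Sum>j\<in>{1..m}. ys ! (m - j)) + (\<Sum>j\<in>{1..m}. int j) - int m * t"
    unfolding v_def by (simp add: sum.distrib sum_subtractf)
  also have "(\<Sum>j\<in>{1..m}. ys ! (m - j)) = (\<Sum>k<m. ys ! k)"
    by (rule sum.reindex_bij_witness[where i="\<lambda>k. m - k" and j="\<lambda>j. m - j"]) auto
  also have "(\<Sum>k<m. ys ! k) = \<Sum>Y"
  proof -
    have "(\<Sum>k<m. ys ! k) = sum_list ys" using lenm by (simp add: sum_list_sum_nth atLeast0LessThan)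
    also have "\<dots> = \<Sum>(set ys)" using sum_list_distinct_conv_sum_set[OF dist, of id] by simp
    finally show ?thesis using sety by simp
  qed
  finally have "2 * int (psize lam) = 2 * \<Sum>Y + 2 * (\<Sum>j\<in>{1..m}. int j) - 2 * int m * t" by simp
  moreover have "2 * int m * t = 2 * int m * a + 2 * (int m * int m)" unfolding t_def by (simp add: algebra_simps)
  moreover have "int m ^ 2 = int m * int m" by (simp add: power2_eq_square)
  moreover have "2 * (\<Sum>j\<in>{1..m}. int j) = int m * int m + int m" using gauss2[of m] by (simp add: algebra_simps)
  ultimately have "2 * int (psize lam) = 2 * \<Sum>Y - int m ^ 2 + int m - 2 * a * int m"
    by (simp add: algebra_simps)
  thus ?thesis using lam(1) beta unfolding t_def m_def by blast
qed



lemma runner_set_eq: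
  assumes "e > 0" "i < e"
  shows "runner_set e B i = {y. int e * y + int i \<in> B}"
proof
  show "runner_set e B i \<subseteq> {y. int e * y + int i \<in> B}"
  proof
    fix y assume "y \<in> runner_set e B i"
    then obtain b where b: "b \<in> B" "b mod int e = int i" "y = (b - int i) div int e"
      unfolding runner_set_def by auto
    have "(b - int i) mod int e = (b mod int e - int i) mod int e" by (simp add: mod_diff_left_eq)
    hence "(b - int i) mod int e = 0" using b(2) by simp
    hence "int e * y = b - int i" using b(3) by (metis add.right_neutral div_mult_mod_eq mult.commute)
    thus "y \<in> {y. int e * y + int i \<in> B}" using b(1) by simp
  qed
next
  show "{y. int e * y + int i \<in> B} \<subseteq> runner_set e B i"
  proof
    fix y assume y: "y \<in> {y. int e * y + int i \<in> B}"
    have m: "(int e * y + int i) mod int e = int i" using assms by simp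
    have "(int e * y + int i - int i) div int e = y" using assms by simp
    thus "y \<in> runner_set e B i" unfolding runner_set_def using y m by force
  qed
qed

lemma eta_pair_eq:
  assumes "is_partition rho" "beta_set rho t = runner_set e (beta_set lam s) i"
  shows "eta_pair e lam s i = (rho, t)"
  unfolding eta_pair_def
proof (rule the_equality)
  show "case (rho, t) of (rho, t) \<Rightarrow> is_partition rho \<and> beta_set rho t = runner_set e (beta_set lam s) i"
    using assms by simp
next
  fix x assume "case x of (rho, t) \<Rightarrow> is_partition rho \<and> beta_set rho t = runner_set e (beta_set lam s) i"
  then obtain r1 t1 where x: "x = (r1, t1)" "is_partition r1" "beta_set r1 t1 = beta_set rho t"
    using assms(2) by (cases x) auto
  thus "x = (rho, t)" using beta_unique[OF x(2) assms(1) x(3)] by simp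
qed

lemma eta_gen:
  assumes "C = runner_set e (beta_set lam s) i" "{..<a} \<subseteq> C" "finite (C \<inter> {a..})"
  shows "eta_t e lam s i = a + int (card (C \<inter> {a..}))"
    "2 * int (psize (eta_rho e lam s i)) = 2 * \<Sum>(C \<inter> {a..}) - int (card (C \<inter> {a..}))^2
        + int (card (C \<inter> {a..})) - 2 * a * int (card (C \<inter> {a..}))"
proof -
  obtain rho where rho: "is_partition rho" "beta_set rho (a + int (card (C \<inter> {a..}))) = (C \<inter> {a..}) \<union> {..<a}"
     "2 * int (psize rho) = 2 * \<Sum>(C \<inter> {a..}) - int (card (C \<inter> {a..}))^2
        + int (card (C \<inter> {a..})) - 2 * a * int (card (C \<inter> {a..}))"
    using beta_exists[OF assms(3)] by auto
  have "(C \<inter> {a..}) \<union> {..<a} = C" using assms(2) by auto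
  hence "eta_pair e lam s i = (rho, a + int (card (C \<inter> {a..})))"
    using eta_pair_eq[OF rho(1)] rho(2) assms(1) by simp
  thus "eta_t e lam s i = a + int (card (C \<inter> {a..}))"
    "2 * int (psize (eta_rho e lam s i)) = 2 * \<Sum>(C \<inter> {a..}) - int (card (C \<inter> {a..}))^2
        + int (card (C \<inter> {a..})) - 2 * a * int (card (C \<inter> {a..}))"
    unfolding eta_t_def eta_rho_def using rho(3) by auto
qed

definition Yset :: "nat \<Rightarrow> nat list \<Rightarrow> int \<Rightarrow> int \<Rightarrow> nat \<Rightarrow> int set" where
  "Yset e lam s a i = {y. int e * y + int i \<in> beta_set lam s} \<inter> {a..}"

lemma decomp_X:
  assumes e: "e > 0" and "is_partition lam" "length lam \<le> L" "int e * a = s - int L"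
  shows "bf lam s ` {1..L} = (\<lambda>(i, y). int e * y + int i) ` (SIGMA i:{..<e}. Yset e lam s a i)"
    "inj_on (\<lambda>(i, y). int e * y + int i) (SIGMA i:{..<e}. Yset e lam s a i)"
proof -
  have X: "bf lam s ` {1..L} = beta_set lam s \<inter> {int e * a..}" using beta_top[OF assms(2,3)] assms(4) by simp
  show "bf lam s ` {1..L} = (\<lambda>(i, y). int e * y + int i) ` (SIGMA i:{..<e}. Yset e lam s a i)"
  proof
    show "bf lam s ` {1..L} \<subseteq> (\<lambda>(i, y). int e * y + int i) ` (SIGMA i:{..<e}. Yset e lam s a i)"
    proof
      fix b assume "b \<in> bf lam s ` {1..L}"
      hence b: "b \<in> beta_set lam s" "b \<ge> int e * a" using X by auto
      define i where "i = nat (b mod int e)"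
      define y where "y = b div int e"
      have bi: "b = int e * y + int i" unfolding i_def y_def using e by simp
      have "i < e" unfolding i_def using e by (simp add: nat_less_iff)
      moreover have "y \<ge> a"
      proof (rule ccontr)
        assume "\<not> a \<le> y"
        hence "y + 1 \<le> a" by simp
        hence "int e * (y + 1) \<le> int e * a" using e by simp
        moreover have "int i < int e" using \<open>i < e\<close> by simp
        ultimately show False using b(2) bi by (simp add: algebra_simps)
      qed
      ultimately have "(i, y) \<in> (SIGMA i:{..<e}. Yset e lam s a i)" unfolding Yset_def using b(1) bi by auto
      thus "b \<in> (\<lambda>(i, y). int e * y + int i) ` (SIGMA i:{..<e}. Yset e lam s a i)" using bi by force
    qed
  next
    show "(\<lambda>(i, y). int e * y + int i) ` (SIGMA i:{..<e}. Yset e lam s a i) \<subseteq> bf lam s ` {1..L}"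
    proof
      fix b assume "b \<in> (\<lambda>(i, y). int e * y + int i) ` (SIGMA i:{..<e}. Yset e lam s a i)"
      then obtain i y where iy: "i < e" "y \<ge> a" "int e * y + int i \<in> beta_set lam s" "b = int e * y + int i"
        unfolding Yset_def by auto
      have "int e * a \<le> int e * y" using iy(2) e by simp
      hence "b \<ge> int e * a" using iy(4) by simp
      thus "b \<in> bf lam s ` {1..L}" using X iy by auto
    qed
  qed
  show "inj_on (\<lambda>(i, y). int e * y + int i) (SIGMA i:{..<e}. Yset e lam s a i)"
  proof (rule inj_onI)
    fix p q assume pq: "p \<in> (SIGMA i:{..<e}. Yset e lam s a i)" "q \<in> (SIGMA i:{..<e}. Yset e lam s a i)"
      "(\<lambda>(i, y). int e * y + int i) p = (\<lambda>(i, y). int e * y + int i) q"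
    obtain i y j z where ij: "p = (i, y)" "q = (j, z)" by (cases p, cases q) auto
    have h: "i < e" "j < e" "int e * y + int i = int e * z + int j" using pq ij by auto
    have "(int e * y + int i) mod int e = int i" using h(1) e by simp
    moreover have "(int e * z + int j) mod int e = int j" using h(2) e by simp
    ultimately have "int i = int j" using h(3) by metis
    hence "i = j" by simp
    thus "p = q" using h(3) e ij by simp
  qed
qed

lemma Yset_finite:
  assumes e: "e > 0" and "is_partition lam" "length lam \<le> L" "int e * a = s - int L" "i < e"
  shows "finite (Yset e lam s a i)"
proof -
  have "(\<lambda>y. (i, y)) ` Yset e lam s a i \<subseteq> (SIGMA i:{..<e}. Yset e lam s a i)" using assms(5) by auto
  hence "inj_on (\<lambda>y. int e * y + int i) (Yset e lam s a i)"
    using e by (auto simp: inj_on_def)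
  moreover have "(\<lambda>y. int e * y + int i) ` Yset e lam s a i \<subseteq> bf lam s ` {1..L}"
    using decomp_X(1)[OF assms(1-4)] assms(5) by force
  moreover have "finite (bf lam s ` {1..L})" by simp
  ultimately have "finite ((\<lambda>y. int e * y + int i) ` Yset e lam s a i)" using finite_subset by blast
  thus ?thesis using finite_imageD \<open>inj_on (\<lambda>y. int e * y + int i) (Yset e lam s a i)\<close> by blast
qed

lemma sum_decomp:
  assumes e: "e > 0" and "is_partition lam" "length lam \<le> L" "int e * a = s - int L"
  shows "(\<Sum>x\<in>{1..L}. g (bf lam s x)) = (\<Sum>i<e. \<Sum>y\<in>Yset e lam s a i. g (int e * y + int i))"
proof -
  have "(\<Sum>x\<in>{1..L}. g (bf lam s x)) = (\<Sum>b\<in>bf lam s ` {1..L}. g b)"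
    using sum.reindex[OF bf_inj[OF assms(2)], of g] by simp
  also have "\<dots> = (\<Sum>p\<in>(SIGMA i:{..<e}. Yset e lam s a i). g ((\<lambda>(i, y). int e * y + int i) p))"
    unfolding decomp_X(1)[OF assms] using sum.reindex[OF decomp_X(2)[OF assms], of g] by simp
  also have "\<dots> = (\<Sum>i<e. \<Sum>y\<in>Yset e lam s a i. g (int e * y + int i))"
    using sum.Sigma[of "{..<e}" "Yset e lam s a", symmetric] Yset_finite[OF assms] by (simp add: split_def)
  finally show ?thesis .
qed

lemma eta_comp:
  assumes e: "e > 0" and "is_partition lam" "length lam \<le> L" "int e * a = s - int L" "i < e"
  shows "eta_t e lam s i = a + int (card (Yset e lam s a i))"
    "2 * int (psize (eta_rho e lam s i)) = 2 * \<Sum>(Yset e lam s a i) - int (card (Yset e lam s a i))^2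
        + int (card (Yset e lam s a i)) - 2 * a * int (card (Yset e lam s a i))"
proof -
  define C where "C = runner_set e (beta_set lam s) i"
  have C: "C = {y. int e * y + int i \<in> beta_set lam s}" unfolding C_def using runner_set_eq[OF e assms(5)] .
  have Y: "C \<inter> {a..} = Yset e lam s a i" unfolding C Yset_def by simp
  have "{..<a} \<subseteq> C"
  proof
    fix y assume "y \<in> {..<a}"
    hence "y + 1 \<le> a" by simp
    hence "int e * (y + 1) \<le> int e * a" using e by simp
    hence "int e * y + int i < s - int L" using assms(4,5) by (simp add: algebra_simps)
    thus "y \<in> C" unfolding C using beta_rep[OF assms(2,3), of s] by auto
  qed
  from eta_gen[OF C_def this] Y Yset_finite[OF assms]
  show "eta_t e lam s i = a + int (card (Yset e lam s a i))"
    "2 * int (psize (eta_rho e lam s i)) = 2 * \<Sum>(Yset e lam s a i) - int (card (Yset e lam s a i))^2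
        + int (card (Yset e lam s a i)) - 2 * a * int (card (Yset e lam s a i))" by auto
qed

lemma good_L:
  assumes "e > 0"
  shows "\<exists>L. M \<le> L \<and> int e * ((s - int L) div int e) = s - int L"
proof -
  define d where "d = (s - int M) mod int e"
  define q where "q = (s - int M) div int e"
  have d0: "d \<ge> 0" unfolding d_def using assms by simp
  define L where "L = M + nat d"
  have iL: "int L = int M + d" unfolding L_def using d0 by simp
  have "q * int e + d = s - int M" unfolding q_def d_def by (rule div_mult_mod_eq)
  hence sl: "s - int L = int e * q" using iL by (simp add: algebra_simps)
  hence "(s - int L) div int e = q" using assms by simp
  hence "int e * ((s - int L) div int e) = s - int L" using sl by simp
  moreover have "M \<le> L" unfolding L_def by simp
  ultimately show ?thesis by blast
qed

lemma eta_sum: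
  assumes e: "e > 0" and "is_partition lam"
  shows "(\<Sum>i<e. eta_t e lam s i) = s"
proof -
  obtain L where L: "length lam \<le> L" "int e * ((s - int L) div int e) = s - int L" using good_L[OF e] by blast
  define a where "a = (s - int L) div int e"
  have aL: "int e * a = s - int L" using L(2) unfolding a_def .
  have "(\<Sum>i<e. eta_t e lam s i) = (\<Sum>i<e. a + int (card (Yset e lam s a i)))"
    using eta_comp(1)[OF e assms(2) L(1) aL] by simp
  also have "\<dots> = int e * a + (\<Sum>i<e. int (card (Yset e lam s a i)))" by (simp add: sum.distrib)
  also have "(\<Sum>i<e. int (card (Yset e lam s a i))) = (\<Sum>x\<in>{1..L}. 1)"
    using sum_decomp[OF e assms(2) L(1) aL, of "\<lambda>_. 1::int"] by simp
  finally show ?thesis using aL by simp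
qed



lemma div_succ:
  fixes z :: int assumes "e > 0"
  shows "(z + 1) div e = z div e + (if (z + 1) mod e = 0 then 1 else 0)"
proof -
  define q where "q = z div e"
  define r where "r = z mod e"
  have z: "z = q * e + r" unfolding q_def r_def by simp
  have r: "0 \<le> r" "r < e" unfolding r_def using assms by simp_all
  show ?thesis
  proof (cases "r + 1 = e")
    case True
    hence "z + 1 = (q + 1) * e" using z by (simp add: algebra_simps)
    thus ?thesis using assms q_def by simp
  next
    case False
    hence r1: "r + 1 < e" using r by simp
    have zz: "z + 1 = (r + 1) + q * e" using z by simp
    have "(z + 1) div e = q + (r + 1) div e" unfolding zz using assms by (intro div_mult_self1) simp
    moreover have "(z + 1) mod e = (r + 1) mod e" unfolding zz by (rule mod_mult_self1)
    ultimately have "(z + 1) div e = (r + 1) div e + q" "(z + 1) mod e = (r + 1) mod e" by simp_all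
    moreover have "(r + 1) div e = 0" "(r + 1) mod e = r + 1" using r r1 by simp_all
    ultimately show ?thesis using q_def r by simp
  qed
qed

lemma mod_zero_iff:
  fixes w c :: int assumes "0 \<le> c" "c < e"
  shows "(w - c) mod e = 0 \<longleftrightarrow> w mod e = c"
proof -
  have "(w - c) mod e = 0 \<longleftrightarrow> e dvd (w - c)" by (simp add: dvd_eq_mod_eq_0)
  also have "\<dots> \<longleftrightarrow> w mod e = c mod e" by (simp add: mod_eq_dvd_iff)
  also have "c mod e = c" using assms by simp
  finally show ?thesis .
qed

lemma card_res:
  fixes u c :: int and e :: nat
  assumes "e > 0" "0 \<le> c" "c < int e"
  shows "int (card {y\<in>{1..p}. (u + int y) mod int e = c}) = (u + int p - c) div int e - (u - c) div int e"
proof (induction p)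
  case 0 thus ?case by simp
next
  case (Suc p)
  have set: "{y\<in>{1..Suc p}. (u + int y) mod int e = c} =
     {y\<in>{1..p}. (u + int y) mod int e = c} \<union> (if (u + int (Suc p)) mod int e = c then {Suc p} else {})"
    by (auto simp: le_Suc_eq)
  have card: "int (card {y\<in>{1..Suc p}. (u + int y) mod int e = c}) =
     int (card {y\<in>{1..p}. (u + int y) mod int e = c}) + (if (u + int (Suc p)) mod int e = c then 1 else 0)"
    unfolding set by (auto simp: card_insert_if)
  define z where "z = u + int p - c"
  have zs: "u + int (Suc p) - c = z + 1" unfolding z_def by simp
  have D: "(z + 1) div int e = z div int e + (if (z + 1) mod int e = 0 then 1 else 0)"
    using div_succ[of "int e" z] assms by simp
  have "(u + int (Suc p) - c) mod int e = 0 \<longleftrightarrow> (u + int (Suc p)) mod int e = c"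
    by (rule mod_zero_iff[OF assms(2,3)])
  hence iff: "(z + 1) mod int e = 0 \<longleftrightarrow> (u + int (Suc p)) mod int e = c" unfolding zs .
  have e1: "(if (u + int (Suc p)) mod int e = c then 1 else 0) = (if (z + 1) mod int e = 0 then (1::int) else 0)"
    using iff by simp
  have IH: "int (card {y\<in>{1..p}. (u + int y) mod int e = c}) = z div int e - (u - c) div int e"
    using Suc.IH unfolding z_def .
  show ?case unfolding zs using card IH D e1 by linarith
qed

definition rc :: "nat \<Rightarrow> nat list \<Rightarrow> int \<Rightarrow> int \<Rightarrow> nat" where
  "rc e lam s v = (\<Sum>x\<in>{1..length lam}. card {y\<in>{1..part lam x}. (s + int y - int x) mod int e = v})"

lemma sum_ind_card: "finite A \<Longrightarrow> (\<Sum>y\<in>A. if P y then 1 else (0::nat)) = card {y\<in>A. P y}"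
proof -
  assume A: "finite A"
  have "card {y\<in>A. P y} = (\<Sum>y\<in>{y\<in>A. P y}. 1)" by (rule card_eq_sum)
  also have "\<dots> = (\<Sum>y\<in>A. if P y then 1 else (0::nat))" by (rule sum.inter_filter[OF A])
  finally show ?thesis by simp
qed

lemma count_residues:
  "count (residues e lams s) v = (\<Sum>k<length lams. rc e (lams ! k) (s ! k) v)"
proof -
  have "count (residues e lams s) v = (\<Sum>k<length lams. \<Sum>x\<in>{1..length (lams ! k)}. \<Sum>y\<in>{1..part (lams ! k) x}.
        count {# (s ! k + int y - int x) mod int e #} v)"
    unfolding residues_def count_sum ..
  also have "\<dots> = (\<Sum>k<length lams. \<Sum>x\<in>{1..length (lams ! k)}. \<Sum>y\<in>{1..part (lams ! k) x}.
        if (s ! k + int y - int x) mod int e = v then 1 else 0)"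
    by (intro sum.cong refl) simp
  also have "\<dots> = (\<Sum>k<length lams. rc e (lams ! k) (s ! k) v)"
    unfolding rc_def by (intro sum.cong refl sum_ind_card) simp
  finally show ?thesis .
qed

lemma size_sum_mset: "size (sum (f :: 'b \<Rightarrow> 'a multiset) A) = (\<Sum>a\<in>A. size (f a))"
  by (induct A rule: infinite_finite_induct) simp_all

lemma msize_residues:
  "msize lams = size (residues e lams s)"
  unfolding residues_def msize_def size_sum_mset
proof (rule sum.cong[OF refl])
  fix k assume "k \<in> {..<length lams}"
  have "psize (lams ! k) = (\<Sum>x\<in>{1..length (lams ! k)}. part (lams ! k) x)" by (rule psize_sum) simp
  thus "psize (lams ! k) = (\<Sum>x\<in>{1..length (lams ! k)}. \<Sum>y\<in>{1..part (lams ! k) x}. size {#(s ! k + int y - int x) mod int e#})"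
    by simp
qed



lemma rc_formula1:
  assumes e: "e > 0" and "is_partition lam" "length lam \<le> L" "0 \<le> c" "c < int e"
  shows "int (rc e lam s c) = (\<Sum>x\<in>{1..L}. (bf lam s x - c) div int e - (s - int x - c) div int e)"
proof -
  have "int (rc e lam s c) = (\<Sum>x\<in>{1..length lam}. int (card {y\<in>{1..part lam x}. (s + int y - int x) mod int e = c}))"
    unfolding rc_def by simp
  also have "\<dots> = (\<Sum>x\<in>{1..L}. int (card {y\<in>{1..part lam x}. (s + int y - int x) mod int e = c}))"
    by (rule sum.mono_neutral_left) (use assms(3) in \<open>auto simp: part_def\<close>)
  also have "\<dots> = (\<Sum>x\<in>{1..L}. (bf lam s x - c) div int e - (s - int x - c) div int e)"
  proof (rule sum.cong[OF refl])
    fix x assume "x \<in> {1..L}"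
    have "{y\<in>{1..part lam x}. (s + int y - int x) mod int e = c} = {y\<in>{1..part lam x}. ((s - int x) + int y) mod int e = c}"
      by (simp add: algebra_simps)
    thus "int (card {y\<in>{1..part lam x}. (s + int y - int x) mod int e = c}) = (bf lam s x - c) div int e - (s - int x - c) div int e"
      using card_res[OF e assms(4,5), where u="s - int x" and p="part lam x"] unfolding bf_def by (simp add: algebra_simps)
  qed
  finally show ?thesis .
qed

lemma phi_runner:
  assumes "e > 0" "i < e" "c < e"
  shows "(int e * y + int i - int c) div int e = y - (if i < c then 1 else 0)"
proof -
  have "(int e * y + int i - int c) div int e = ((int i - int c) + y * int e) div int e" by (simp add: algebra_simps)
  also have "\<dots> = y + (int i - int c) div int e" using assms by (intro div_mult_self1) simp
  also have "(int i - int c) div int e = - (if i < c then 1 else 0)"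
  proof (cases "i < c")
    case True
    have "(int i - int c) div int e = ((int i - int c + int e) + (-1) * int e) div int e" by simp
    also have "\<dots> = -1 + (int i - int c + int e) div int e" using assms by (intro div_mult_self1) simp
    also have "(int i - int c + int e) div int e = 0" using True assms by (intro div_pos_pos_trivial) simp_all
    finally have "(int i - int c) div int e = -1" by simp
    thus ?thesis using True by simp
  next
    case False thus ?thesis using assms by simp
  qed
  finally show ?thesis by simp
qed

definition KK :: "nat \<Rightarrow> int \<Rightarrow> nat \<Rightarrow> nat \<Rightarrow> int" where
  "KK e s L c = (let a = (s - int L) div int e in
     - int e * (a * a - a) + 2 * int c * a - 2 * (\<Sum>x\<in>{1..L}. (s - int x - int c) div int e))"

definition QQ :: "nat \<Rightarrow> nat list \<Rightarrow> int \<Rightarrow> nat \<Rightarrow> int" where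
  "QQ e lam s c = 2 * int (weight e lam s) + (\<Sum>i<e. eta_t e lam s i * eta_t e lam s i - eta_t e lam s i)
      - 2 * (\<Sum>i<c. eta_t e lam s i)"

lemma main_formula:
  assumes e: "e > 0" and lam: "is_partition lam" and L: "length lam \<le> L"
    and aL: "int e * ((s - int L) div int e) = s - int L" and c: "c < e"
  shows "2 * int (rc e lam s (int c)) = QQ e lam s c + KK e s L c"
proof -
  define a where "a = (s - int L) div int e"
  have aL': "int e * a = s - int L" using aL unfolding a_def .
  define Y where "Y i = Yset e lam s a i" for i
  define m where "m i = int (card (Y i))" for i
  define t where "t i = eta_t e lam s i" for i
  define P where "P i = int (psize (eta_rho e lam s i))" for i
  have tm: "\<And>i. i < e \<Longrightarrow> t i = a + m i" using eta_comp(1)[OF e lam L aL'] unfolding t_def m_def Y_def by simp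
  have PY: "\<And>i. i < e \<Longrightarrow> 2 * \<Sum>(Y i) = 2 * P i + (t i * t i - t i) - (a * a - a)"
  proof -
    fix i assume i: "i < e"
    have "2 * P i = 2 * \<Sum>(Y i) - m i ^ 2 + m i - 2 * a * m i"
      using eta_comp(2)[OF e lam L aL' i] unfolding P_def m_def Y_def by simp
    thus "2 * \<Sum>(Y i) = 2 * P i + (t i * t i - t i) - (a * a - a)"
      using tm[OF i] by (simp add: algebra_simps power2_eq_square)
  qed
  have W: "int (weight e lam s) = (\<Sum>i<e. P i)" unfolding weight_def P_def by simp
  have "int (rc e lam s (int c)) = (\<Sum>x\<in>{1..L}. (bf lam s x - int c) div int e) - (\<Sum>x\<in>{1..L}. (s - int x - int c) div int e)"
    using rc_formula1[OF e lam L, of "int c" s] c by (simp add: sum_subtractf)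
  also have "(\<Sum>x\<in>{1..L}. (bf lam s x - int c) div int e) = (\<Sum>i<e. \<Sum>y\<in>Y i. (int e * y + int i - int c) div int e)"
    using sum_decomp[OF e lam L aL', of "\<lambda>b. (b - int c) div int e"] unfolding Y_def by simp
  also have "\<dots> = (\<Sum>i<e. \<Sum>y\<in>Y i. y - (if i < c then 1 else 0))"
    by (intro sum.cong refl phi_runner e c) simp
  also have "\<dots> = (\<Sum>i<e. \<Sum>(Y i)) - (\<Sum>i<e. if i < c then m i else 0)"
    unfolding m_def by (simp add: sum_subtractf sum.distrib) (intro sum.cong refl, simp)
  also have "(\<Sum>i<e. if i < c then m i else 0) = (\<Sum>i<c. m i)"
  proof -
    have "(\<Sum>i<e. if i < c then m i else 0) = (\<Sum>i\<in>{..<e} \<inter> {i. i < c}. m i)" by (simp add: sum.If_cases)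
    also have "{..<e} \<inter> {i. i < c} = {..<c}" using c by auto
    finally show ?thesis .
  qed
  finally have R0: "int (rc e lam s (int c)) = (\<Sum>i<e. \<Sum>(Y i)) - (\<Sum>i<c. m i) - (\<Sum>x\<in>{1..L}. (s - int x - int c) div int e)" .
  have dd: "(\<Sum>i<e. 2 * \<Sum>(Y i)) = 2 * (\<Sum>i<e. \<Sum>(Y i))" by (simp add: sum_distrib_left)
  have R: "2 * int (rc e lam s (int c)) = (\<Sum>i<e. 2 * \<Sum>(Y i)) - 2 * (\<Sum>i<c. m i) - 2 * (\<Sum>x\<in>{1..L}. (s - int x - int c) div int e)"
    unfolding dd using R0 by linarith
  have S1: "(\<Sum>i<e. 2 * \<Sum>(Y i)) = 2 * int (weight e lam s) + (\<Sum>i<e. t i * t i - t i) - int e * (a * a - a)"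
  proof -
    have "(\<Sum>i<e. 2 * \<Sum>(Y i)) = (\<Sum>i<e. 2 * P i + (t i * t i - t i) - (a * a - a))"
      by (rule sum.cong[OF refl]) (simp add: PY)
    also have "\<dots> = 2 * (\<Sum>i<e. P i) + (\<Sum>i<e. t i * t i - t i) - int e * (a * a - a)"
      by (simp add: sum.distrib sum_subtractf sum_distrib_left)
    finally show ?thesis using W by simp
  qed
  have S2: "(\<Sum>i<c. m i) = (\<Sum>i<c. t i) - int c * a"
  proof -
    have "(\<Sum>i<c. m i) = (\<Sum>i<c. t i - a)" by (rule sum.cong[OF refl]) (use tm c in auto)
    thus ?thesis by (simp add: sum_subtractf)
  qed
  show ?thesis unfolding QQ_def KK_def Let_def a_def[symmetric] using R S1 S2 unfolding t_def by (simp add: algebra_simps)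
qed



lemma QQ_diff:
  assumes e: "e > 0" and "is_partition l1" "is_partition l2" "c < e"
  shows "2 * int (rc e l1 s (int c)) - 2 * int (rc e l2 s (int c)) = QQ e l1 s c - QQ e l2 s c"
proof -
  obtain L where L: "max (length l1) (length l2) \<le> L" "int e * ((s - int L) div int e) = s - int L"
    using good_L[OF e] by blast
  show ?thesis using main_formula[OF e assms(2) _ L(2) assms(4)] main_formula[OF e assms(3) _ L(2) assms(4)] L(1)
    by simp
qed

lemma rc_out:
  assumes "e > 0" "v < 0 \<or> v \<ge> int e"
  shows "rc e lam s v = 0"
proof -
  have "\<And>z. z mod int e \<noteq> v" using assms by (metis Euclidean_Rings.pos_mod_bound Euclidean_Rings.pos_mod_sign not_le of_nat_0_less_iff)
  thus ?thesis unfolding rc_def by simp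
qed

lemma configs_len: "(lams, s) \<in> configs r \<Longrightarrow> length lams = r \<and> length s = r \<and> (\<forall>k<r. is_partition (lams ! k))"
  unfolding configs_def by auto

lemma res_eq_iff:
  assumes e: "e > 0" and "(lams, s) \<in> configs r" "(mus, s) \<in> configs r"
  shows "residues e lams s = residues e mus s \<longleftrightarrow>
     (\<forall>c<e. (\<Sum>k<r. QQ e (lams ! k) (s ! k) c) = (\<Sum>k<r. QQ e (mus ! k) (s ! k) c))"
proof -
  have L1: "length lams = r" "\<forall>k<r. is_partition (lams ! k)" using configs_len[OF assms(2)] by auto
  have L2: "length mus = r" "\<forall>k<r. is_partition (mus ! k)" using configs_len[OF assms(3)] by auto
  have key: "2 * int (count (residues e lams s) (int c)) - 2 * int (count (residues e mus s) (int c)) =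
     (\<Sum>k<r. QQ e (lams ! k) (s ! k) c) - (\<Sum>k<r. QQ e (mus ! k) (s ! k) c)" if c: "c < e" for c
  proof -
    have "2 * int (count (residues e lams s) (int c)) - 2 * int (count (residues e mus s) (int c)) =
       (\<Sum>k<r. 2 * int (rc e (lams ! k) (s ! k) (int c)) - 2 * int (rc e (mus ! k) (s ! k) (int c)))"
      unfolding count_residues L1(1) L2(1) by (simp add: sum_subtractf sum_distrib_left)
    also have "\<dots> = (\<Sum>k<r. QQ e (lams ! k) (s ! k) c - QQ e (mus ! k) (s ! k) c)"
      by (rule sum.cong[OF refl]) (use QQ_diff[OF e _ _ c] L1 L2 in auto)
    finally show ?thesis by (simp add: sum_subtractf)
  qed
  have out: "count (residues e lams s) v = 0 \<and> count (residues e mus s) v = 0" if "v < 0 \<or> v \<ge> int e" for v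
    unfolding count_residues using rc_out[OF e that] by simp
  show ?thesis
  proof
    assume "residues e lams s = residues e mus s"
    thus "\<forall>c<e. (\<Sum>k<r. QQ e (lams ! k) (s ! k) c) = (\<Sum>k<r. QQ e (mus ! k) (s ! k) c)"
      using key by fastforce
  next
    assume H: "\<forall>c<e. (\<Sum>k<r. QQ e (lams ! k) (s ! k) c) = (\<Sum>k<r. QQ e (mus ! k) (s ! k) c)"
    show "residues e lams s = residues e mus s"
    proof (rule multiset_eqI)
      fix v
      show "count (residues e lams s) v = count (residues e mus s) v"
      proof (cases "v < 0 \<or> v \<ge> int e")
        case True thus ?thesis using out by simp
      next
        case False
        then obtain c where c: "v = int c" "c < e" by (metis nat_0_le nat_less_iff not_le)
        show ?thesis using key[OF c(2)] H c by simp
      qed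
    qed
  qed
qed

lemma block_rel_iff:
  assumes e: "e > 0" and "(lams, s) \<in> configs r" "(mus, s) \<in> configs r"
  shows "((lams, s), (mus, s)) \<in> block_rel e r \<longleftrightarrow>
     (\<forall>c<e. (\<Sum>k<r. QQ e (lams ! k) (s ! k) c) = (\<Sum>k<r. QQ e (mus ! k) (s ! k) c))"
  unfolding block_rel_def using res_eq_iff[OF assms] assms(2,3) msize_residues[of lams e s] msize_residues[of mus e s]
  by auto



definition Rset :: "(nat \<Rightarrow> int) \<Rightarrow> nat \<Rightarrow> nat \<Rightarrow> int set" where
  "Rset t w i = (if i = 0 then {..<t 0 - 1} \<union> {t 0 - 1 + int w} else {..<t i})"

definition Bset :: "nat \<Rightarrow> (nat \<Rightarrow> int) \<Rightarrow> nat \<Rightarrow> int set" where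
  "Bset e t w = {int e * y + int i | i y. i < e \<and> y \<in> Rset t w i}"

lemma repr_unique:
  assumes e: "e > 0" and "i < e" "j < e" "int e * y + int i = int e * z + int j"
  shows "i = j \<and> y = z"
proof -
  have "(int e * y + int i) mod int e = int i" using assms(2) e by simp
  moreover have "(int e * z + int j) mod int e = int j" using assms(3) e by simp
  ultimately have "int i = int j" using assms(4) by metis
  hence "i = j" by simp
  thus ?thesis using assms(4) e by simp
qed

lemma in_Bset: "e > 0 \<Longrightarrow> i < e \<Longrightarrow> int e * y + int i \<in> Bset e t w \<longleftrightarrow> y \<in> Rset t w i"
  unfolding Bset_def using repr_unique by blast

lemma runner_Bset: "e > 0 \<Longrightarrow> i < e \<Longrightarrow> runner_set e (Bset e t w) i = Rset t w i"
  using runner_set_eq in_Bset by auto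

lemma mk_exists:
  assumes e: "e > 0"
  shows "\<exists>lam s'. is_partition lam \<and> beta_set lam s' = Bset e t w"
proof -
  define M where "M = (\<Sum>i<e. \<bar>t i\<bar>)"
  have Mi: "\<And>i. i < e \<Longrightarrow> \<bar>t i\<bar> \<le> M" unfolding M_def
    by (rule member_le_sum) auto
  define a where "a = - M - 1"
  have at: "\<And>i. i < e \<Longrightarrow> a \<le> t i - 1" using Mi unfolding a_def by (smt (verit))
  define X where "X = Bset e t w \<inter> {int e * a..}"
  have low: "{..<int e * a} \<subseteq> Bset e t w"
  proof
    fix b assume "b \<in> {..<int e * a}"
    hence b: "b < int e * a" by simp
    define i where "i = nat (b mod int e)"
    define y where "y = b div int e"
    have bi: "b = int e * y + int i" unfolding i_def y_def using e by simp
    have ie: "i < e" unfolding i_def using e by (simp add: nat_less_iff)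
    have "y < a"
    proof (rule ccontr)
      assume "\<not> y < a"
      hence "int e * a \<le> int e * y" using e by simp
      thus False using b bi by simp
    qed
    hence "y \<in> Rset t w i" unfolding Rset_def using at[OF ie] at[of 0] e by auto
    thus "b \<in> Bset e t w" using bi in_Bset[OF e ie] by simp
  qed
  have fin: "finite X"
  proof -
    have "X \<subseteq> {int e * a .. int e * (M + int w) + int e}"
    proof
      fix b assume "b \<in> X"
      then obtain i y where iy: "i < e" "y \<in> Rset t w i" "b = int e * y + int i" "b \<ge> int e * a"
        unfolding X_def Bset_def by auto
      have "y \<le> M + int w" using iy(2) Mi[OF iy(1)] Mi[of 0] e unfolding Rset_def
        by (auto split: if_splits)
      hence m: "int e * y \<le> int e * (M + int w)" using e by (simp add: mult_left_mono)
      have "int i < int e" using iy(1) by simp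
      hence "b \<le> int e * (M + int w) + int e" using iy m by linarith
      thus "b \<in> {int e * a .. int e * (M + int w) + int e}" using iy by simp
    qed
    thus ?thesis using finite_subset by blast
  qed
  obtain rho where rho: "is_partition rho" "beta_set rho (int e * a + int (card X)) = X \<union> {..<int e * a}"
    using beta_exists[OF fin, of "int e * a"] unfolding X_def by auto
  have "X \<union> {..<int e * a} = Bset e t w" using low unfolding X_def by auto
  thus ?thesis using rho by auto
qed

lemma mk_props:
  assumes e: "e > 0" and lam: "is_partition lam" and B: "beta_set lam s' = Bset e t w"
  shows "\<forall>i<e. eta_t e lam s' i = t i" "weight e lam s' = w" "s' = (\<Sum>i<e. t i)"
proof -
  have C: "\<And>i. i < e \<Longrightarrow> Rset t w i = runner_set e (beta_set lam s') i" using runner_Bset[OF e] B by simp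
  have i0: "eta_t e lam s' 0 = t 0 \<and> psize (eta_rho e lam s' 0) = w"
  proof -
    have R0: "Rset t w 0 = {..<t 0 - 1} \<union> {t 0 - 1 + int w}" unfolding Rset_def by simp
    have I: "Rset t w 0 \<inter> {t 0 - 1..} = {t 0 - 1 + int w}" unfolding R0 by auto
    have "{..<t 0 - 1} \<subseteq> Rset t w 0" unfolding R0 by auto
    from eta_gen[OF C[OF e] this] I show ?thesis by simp
  qed
  have ipos: "eta_t e lam s' i = t i \<and> psize (eta_rho e lam s' i) = 0" if "0 < i" "i < e" for i
  proof -
    have R: "Rset t w i = {..<t i}" unfolding Rset_def using that by simp
    have I: "Rset t w i \<inter> {t i..} = {}" unfolding R by auto
    have "{..<t i} \<subseteq> Rset t w i" unfolding R by auto
    from eta_gen[OF C[OF that(2)] this] I show ?thesis by simp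
  qed
  show T: "\<forall>i<e. eta_t e lam s' i = t i" using i0 ipos by (metis neq0_conv)
  have "weight e lam s' = psize (eta_rho e lam s' 0) + (\<Sum>i\<in>{..<e} - {0}. psize (eta_rho e lam s' i))"
    unfolding weight_def using e by (simp add: sum.remove)
  also have "(\<Sum>i\<in>{..<e} - {0}. psize (eta_rho e lam s' i)) = 0" using ipos by simp
  finally show "weight e lam s' = w" using i0 by simp
  show "s' = (\<Sum>i<e. t i)" using eta_sum[OF e lam, of s'] T by simp
qed

definition mkp :: "nat \<Rightarrow> (nat \<Rightarrow> int) \<Rightarrow> nat \<Rightarrow> nat list" where
  "mkp e t w = (SOME lam. is_partition lam \<and> beta_set lam (\<Sum>i<e. t i) = Bset e t w)"

lemma mkp_props:
  assumes e: "e > 0"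
  shows "is_partition (mkp e t w)" "\<forall>i<e. eta_t e (mkp e t w) (\<Sum>i<e. t i) i = t i"
    "weight e (mkp e t w) (\<Sum>i<e. t i) = w"
proof -
  obtain lam s' where ls: "is_partition lam" "beta_set lam s' = Bset e t w" using mk_exists[OF e] by blast
  have "s' = (\<Sum>i<e. t i)" using mk_props(3)[OF e ls] .
  hence "\<exists>lam. is_partition lam \<and> beta_set lam (\<Sum>i<e. t i) = Bset e t w" using ls by blast
  hence P: "is_partition (mkp e t w) \<and> beta_set (mkp e t w) (\<Sum>i<e. t i) = Bset e t w"
    unfolding mkp_def by (rule someI_ex)
  thus "is_partition (mkp e t w)" by simp
  show "\<forall>i<e. eta_t e (mkp e t w) (\<Sum>i<e. t i) i = t i" using mk_props(1)[OF e] P by simp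
  show "weight e (mkp e t w) (\<Sum>i<e. t i) = w" using mk_props(2)[OF e] P by simp
qed



definition Qf :: "nat \<Rightarrow> (nat \<Rightarrow> nat \<Rightarrow> int) \<Rightarrow> (nat \<Rightarrow> int) \<Rightarrow> nat \<Rightarrow> nat \<Rightarrow> int" where
  "Qf e t W k c = 2 * W k + (\<Sum>x<e. t k x * t k x - t k x) - 2 * (\<Sum>x<c. t k x)"

lemma sumQf_eq:
  assumes cols: "\<forall>x<e. (\<Sum>k<r. ta k x) = (\<Sum>k<r. tb k x)"
    and quad: "(\<Sum>k<r. 2 * Wa k + (\<Sum>x<e. ta k x * ta k x - ta k x)) = (\<Sum>k<r. 2 * Wb k + (\<Sum>x<e. tb k x * tb k x - tb k x))"
    and c: "c \<le> e"
  shows "(\<Sum>k<r. Qf e ta Wa k c) = (\<Sum>k<r. Qf e tb Wb k c)"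
proof -
  have sw: "(\<Sum>k<r. \<Sum>x<c. t k x) = (\<Sum>x<c. \<Sum>k<r. t k x)" for t :: "nat \<Rightarrow> nat \<Rightarrow> int" by (rule sum.swap)
  have "(\<Sum>x<c. \<Sum>k<r. ta k x) = (\<Sum>x<c. \<Sum>k<r. tb k x)" by (rule sum.cong[OF refl]) (use cols c in auto)
  hence "(\<Sum>k<r. \<Sum>x<c. ta k x) = (\<Sum>k<r. \<Sum>x<c. tb k x)" using sw by metis
  moreover have "(\<Sum>k<r. Qf e t W k c) = (\<Sum>k<r. 2 * W k + (\<Sum>x<e. t k x * t k x - t k x)) - 2 * (\<Sum>k<r. \<Sum>x<c. t k x)"
    for t :: "nat \<Rightarrow> nat \<Rightarrow> int" and W
    unfolding Qf_def by (simp only: sum_subtractf sum_distrib_left)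
  ultimately show ?thesis using quad by simp
qed

lemma cols_eq:
  assumes H: "\<forall>c<e. (\<Sum>k<r. Qf e t1 W1 k c) = (\<Sum>k<r. Qf e t2 W2 k c)"
    and rows: "\<forall>k<r. (\<Sum>x<e. t1 k x) = (\<Sum>x<e. t2 k x)"
  shows "\<forall>x<e. (\<Sum>k<r. t1 k x) = (\<Sum>k<r. t2 k x)"
proof -
  have diff: "(\<Sum>k<r. Qf e t W k x) - (\<Sum>k<r. Qf e t W k (Suc x)) = 2 * (\<Sum>k<r. t k x)" for t W x
    unfolding Qf_def by (simp add: sum_subtractf sum.distrib sum_distrib_left)
  have low: "(\<Sum>k<r. t1 k x) = (\<Sum>k<r. t2 k x)" if "Suc x < e" for x
    using diff[of t1 W1 x] diff[of t2 W2 x] H that by simp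
  show ?thesis
  proof (intro allI impI)
    fix x assume x: "x < e"
    show "(\<Sum>k<r. t1 k x) = (\<Sum>k<r. t2 k x)"
    proof (cases "Suc x < e")
      case True thus ?thesis using low by simp
    next
      case False
      hence ex: "e = Suc x" using x by simp
      have "(\<Sum>k<r. \<Sum>y<e. t1 k y) = (\<Sum>k<r. \<Sum>y<e. t2 k y)" using rows by simp
      hence "(\<Sum>y<e. \<Sum>k<r. t1 k y) = (\<Sum>y<e. \<Sum>k<r. t2 k y)" by (metis sum.swap)
      hence "(\<Sum>y<x. \<Sum>k<r. t1 k y) + (\<Sum>k<r. t1 k x) = (\<Sum>y<x. \<Sum>k<r. t2 k y) + (\<Sum>k<r. t2 k x)"
        unfolding ex by simp
      moreover have "(\<Sum>y<x. \<Sum>k<r. t1 k y) = (\<Sum>y<x. \<Sum>k<r. t2 k y)" by (rule sum.cong[OF refl]) (use low ex in auto)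
      ultimately show ?thesis by simp
    qed
  qed
qed

lemma two_row:
  fixes G1 G2 :: "nat \<Rightarrow> int"
  assumes "\<And>l. l < r \<Longrightarrow> l \<noteq> k \<Longrightarrow> l \<noteq> m \<Longrightarrow> G1 l = G2 l" "k \<noteq> m" "k < r" "m < r"
  shows "(\<Sum>l<r. G1 l) = (\<Sum>l<r. G2 l) + (G1 k - G2 k) + (G1 m - G2 m)"
proof -
  have "(\<Sum>l<r. G1 l - G2 l) = (\<Sum>l\<in>{k, m}. G1 l - G2 l)"
    by (rule sum.mono_neutral_right) (use assms in auto)
  thus ?thesis using assms(2) by (simp add: sum_subtractf)
qed

lemma telescope:
  fixes g :: "nat \<Rightarrow> int"
  assumes "\<And>x. Suc x < e \<Longrightarrow> g x + D \<le> g (Suc x)" "i \<le> i'" "i' < e"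
  shows "g i + int (i' - i) * D \<le> g i'"
  using assms(2,3)
proof (induction i' rule: dec_induct)
  case base thus ?case by simp
next
  case (step n)
  have "g n + D \<le> g (Suc n)" using assms(1) step by simp
  moreover have "int (Suc n - i) * D = int (n - i) * D + D" using step by (simp add: Suc_diff_le algebra_simps)
  ultimately show ?case using step by simp
qed

definition dl :: "nat \<Rightarrow> nat \<Rightarrow> nat \<Rightarrow> int" where
  "dl i i' x = (if x = i' then 1 else 0) - (if x = i then 1 else 0)"

lemma dl_sums:
  fixes f :: "nat \<Rightarrow> int"
  assumes "i < e" "i' < e" "i \<noteq> i'" "\<epsilon> * \<epsilon> = 1"
  shows "(\<Sum>x<e. f x + \<epsilon> * dl i i' x) = (\<Sum>x<e. f x)"
    "(\<Sum>x<e. (f x + \<epsilon> * dl i i' x) * (f x + \<epsilon> * dl i i' x) - (f x + \<epsilon> * dl i i' x)) =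
       (\<Sum>x<e. f x * f x - f x) + 2 * \<epsilon> * (f i' - f i) + 2"
proof -
  have s1: "(\<Sum>x<e. g x * dl i i' x) = g i' - g i" for g :: "nat \<Rightarrow> int"
    unfolding dl_def using assms by (simp add: right_diff_distrib sum_subtractf if_distrib[where f="\<lambda>z. g _ * z"] sum.If_cases)
  have s0: "(\<Sum>x<e. dl i i' x) = 0" using s1[of "\<lambda>_. 1"] by simp
  have sq: "dl i i' x * dl i i' x = (if x = i' then 1 else 0) + (if x = i then 1 else 0)" for x
    unfolding dl_def using assms(3) by auto
  have s2: "(\<Sum>x<e. dl i i' x * dl i i' x) = 2" unfolding sq using assms by (simp add: sum.distrib)
  show "(\<Sum>x<e. f x + \<epsilon> * dl i i' x) = (\<Sum>x<e. f x)"
    using s0 by (simp add: sum.distrib sum_distrib_left[symmetric])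
  have pt: "(f x + \<epsilon> * dl i i' x) * (f x + \<epsilon> * dl i i' x) - (f x + \<epsilon> * dl i i' x) =
      (f x * f x - f x) + 2 * \<epsilon> * (f x * dl i i' x) + dl i i' x * dl i i' x - \<epsilon> * dl i i' x" for x
  proof -
    have "(f x + \<epsilon> * dl i i' x) * (f x + \<epsilon> * dl i i' x) = f x * f x + 2 * \<epsilon> * (f x * dl i i' x) + (\<epsilon> * \<epsilon>) * (dl i i' x * dl i i' x)"
      by (simp add: algebra_simps)
    thus ?thesis using assms(4) by simp
  qed
  show "(\<Sum>x<e. (f x + \<epsilon> * dl i i' x) * (f x + \<epsilon> * dl i i' x) - (f x + \<epsilon> * dl i i' x)) =
       (\<Sum>x<e. f x * f x - f x) + 2 * \<epsilon> * (f i' - f i) + 2"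
    unfolding pt using s0 s1[of f] s2 by (simp add: sum.distrib sum_subtractf sum_distrib_left[symmetric])
qed



lemma block_class: "R \<in> blocks e r \<Longrightarrow> \<exists>x0\<in>configs r. R = block_rel e r `` {x0}"
  unfolding blocks_def quotient_def by auto

lemma br_sym: "(X, Y) \<in> block_rel e r \<Longrightarrow> (Y, X) \<in> block_rel e r"
  unfolding block_rel_def by auto

lemma br_trans: "(X, Y) \<in> block_rel e r \<Longrightarrow> (Y, Z) \<in> block_rel e r \<Longrightarrow> (X, Z) \<in> block_rel e r"
  unfolding block_rel_def by auto

lemma R_rel: "R \<in> blocks e r \<Longrightarrow> X \<in> R \<Longrightarrow> Y \<in> R \<Longrightarrow> (X, Y) \<in> block_rel e r"
  using block_class br_sym br_trans by (metis Image_singleton_iff)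

lemma R_closed: "R \<in> blocks e r \<Longrightarrow> X \<in> R \<Longrightarrow> (X, Y) \<in> block_rel e r \<Longrightarrow> Y \<in> R"
  using block_class br_trans by (metis Image_singleton_iff)

lemma R_configs: "R \<in> blocks e r \<Longrightarrow> X \<in> R \<Longrightarrow> X \<in> configs r"
  using R_rel[of R e r X X] unfolding block_rel_def by auto

lemma configs_upd2:
  assumes "(lm, s) \<in> configs r" "k < r" "m < r" "is_partition a" "is_partition b"
  shows "(lm[k := a, m := b], s) \<in> configs r"
proof -
  have "\<forall>x\<in>set (lm[k := a, m := b]). is_partition x"
  proof
    fix x assume "x \<in> set (lm[k := a, m := b])"
    then obtain l where l: "l < length lm" "x = lm[k := a, m := b] ! l" by (auto simp: in_set_conv_nth)
    thus "is_partition x" using assms configs_len[OF assms(1)] by (auto simp: nth_list_update)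
  qed
  thus ?thesis using assms(1) unfolding configs_def by auto
qed

lemma mkp_at:
  assumes e: "e > 0" "(\<Sum>x<e. f x) = sj"
  shows "\<forall>x<e. eta_t e (mkp e f w) sj x = f x" "weight e (mkp e f w) sj = w" "is_partition (mkp e f w)"
  using mkp_props[OF e(1), of f w] assms(2) by auto

lemma QQ_Qf: "QQ e (lm ! k) (s ! k) c = Qf e (\<lambda>k x. eta_t e (lm ! k) (s ! k) x) (\<lambda>k. int (weight e (lm ! k) (s ! k))) k c"
  unfolding QQ_def Qf_def by simp

lemma block_rel_Qf:
  assumes e: "e > 0" and "(lm1, s) \<in> configs r" "(lm2, s) \<in> configs r"
  shows "((lm1, s), (lm2, s)) \<in> block_rel e r \<longleftrightarrow>
    (\<forall>c<e. (\<Sum>k<r. Qf e (\<lambda>k x. eta_t e (lm1 ! k) (s ! k) x) (\<lambda>k. int (weight e (lm1 ! k) (s ! k))) k c) =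
           (\<Sum>k<r. Qf e (\<lambda>k x. eta_t e (lm2 ! k) (s ! k) x) (\<lambda>k. int (weight e (lm2 ! k) (s ! k))) k c))"
  using block_rel_iff[OF assms] unfolding QQ_Qf .

lemma block_rel_suff:
  assumes e: "e > 0" and "(lm1, s) \<in> configs r" "(lm2, s) \<in> configs r"
    and cols: "\<forall>x<e. (\<Sum>k<r. eta_t e (lm1 ! k) (s ! k) x) = (\<Sum>k<r. eta_t e (lm2 ! k) (s ! k) x)"
    and quad: "(\<Sum>k<r. 2 * int (weight e (lm1 ! k) (s ! k)) + (\<Sum>x<e. eta_t e (lm1 ! k) (s ! k) x * eta_t e (lm1 ! k) (s ! k) x - eta_t e (lm1 ! k) (s ! k) x))
       = (\<Sum>k<r. 2 * int (weight e (lm2 ! k) (s ! k)) + (\<Sum>x<e. eta_t e (lm2 ! k) (s ! k) x * eta_t e (lm2 ! k) (s ! k) x - eta_t e (lm2 ! k) (s ! k) x))"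
  shows "((lm1, s), (lm2, s)) \<in> block_rel e r"
  unfolding block_rel_Qf[OF assms(1-3)]
  using sumQf_eq[where ta="\<lambda>k x. eta_t e (lm1 ! k) (s ! k) x" and tb="\<lambda>k x. eta_t e (lm2 ! k) (s ! k) x"
      and Wa="\<lambda>k. int (weight e (lm1 ! k) (s ! k))" and Wb="\<lambda>k. int (weight e (lm2 ! k) (s ! k))", OF cols quad]
  by simp

lemma block_cols:
  assumes e: "e > 0" and c1: "(lm1, s) \<in> configs r" and c2: "(lm2, s) \<in> configs r"
    and rel: "((lm1, s), (lm2, s)) \<in> block_rel e r"
  shows "\<forall>x<e. (\<Sum>k<r. eta_t e (lm1 ! k) (s ! k) x) = (\<Sum>k<r. eta_t e (lm2 ! k) (s ! k) x)"
proof -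
  have rows: "\<forall>k<r. (\<Sum>x<e. eta_t e (lm1 ! k) (s ! k) x) = (\<Sum>x<e. eta_t e (lm2 ! k) (s ! k) x)"
    using eta_sum[OF e] configs_len[OF c1] configs_len[OF c2] by simp
  show ?thesis
    using cols_eq[OF _ rows] rel unfolding block_rel_Qf[OF assms(1-3)] by blast
qed

lemma rouq_R:
  assumes "rouquier_block e R" "(lm, s) \<in> R" "R \<in> blocks e r" "k < r" "Suc x < e"
  shows "int (weight e (lm ! k) (s ! k)) \<le> eta_t e (lm ! k) (s ! k) (Suc x) - eta_t e (lm ! k) (s ! k) x + 1"
proof -
  have "length lm = r" using configs_len[OF R_configs[OF assms(3,2)]] by simp
  thus ?thesis using assms(1,2,4,5) unfolding rouquier_block_def rouquier_multipartition_def rouquier_partition_def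
    by fastforce
qed



theorem lemma3p18:
  fixes e r :: nat and R :: "(nat list list \<times> int list) set"
    and lams :: "nat list list" and s :: "int list"
  assumes "e \<ge> 2" and "r \<ge> 1"
    and "R \<in> blocks e r" and "rouquier_block e R" and "\<not> core_block e R"
    and "(lams, s) \<in> R"
  shows "\<forall>k<r. \<forall>i i'. i < i' \<and> i' \<le> e - 1 \<longrightarrow>
           eta_t e (lams ! k) (s ! k) i' - eta_t e (lams ! k) (s ! k) i \<ge> -1"
proof -
  have e: "e > 0" using assms(1) by simp
  note RB = assms(3) and RQ = assms(4) and LR = assms(6)
  have cl: "(lams, s) \<in> configs r" using R_configs[OF RB LR] .
  have lenl: "length lams = r" "\<forall>k<r. is_partition (lams ! k)" using configs_len[OF cl] by auto
  define tt where "tt lm k x = eta_t e (lm ! k) (s ! k) x" for lm k x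
  define ww where "ww lm k = int (weight e (lm ! k) (s ! k))" for lm k
  have rq: "\<And>lm k x. (lm, s) \<in> R \<Longrightarrow> k < r \<Longrightarrow> Suc x < e \<Longrightarrow> ww lm k \<le> tt lm k (Suc x) - tt lm k x + 1"
    unfolding tt_def ww_def using rouq_R[OF RQ _ RB] by blast
  have rowsum: "\<And>lm k. (lm, s) \<in> configs r \<Longrightarrow> k < r \<Longrightarrow> (\<Sum>x<e. tt lm k x) = s ! k"
    unfolding tt_def using eta_sum[OF e] configs_len by blast
  obtain mu s' j where mu: "(mu, s') \<in> R" "j < length mu" "weight e (mu ! j) (s' ! j) \<noteq> 0"
    using assms(5) unfolding core_block_def by auto
  have "((lams, s), (mu, s')) \<in> block_rel e r" using R_rel[OF RB LR mu(1)] .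
  hence s': "s' = s" and relmu: "((lams, s), (mu, s)) \<in> block_rel e r" unfolding block_rel_def by auto
  have mR: "(mu, s) \<in> R" using mu(1) s' by simp
  have cm: "(mu, s) \<in> configs r" using R_configs[OF RB mR] .
  have lenm: "length mu = r" "\<forall>k<r. is_partition (mu ! k)" using configs_len[OF cm] by auto
  have j: "j < r" "ww mu j \<ge> 1" using mu lenm s' unfolding ww_def by auto
  have cols: "\<forall>x<e. (\<Sum>k<r. tt lams k x) = (\<Sum>k<r. tt mu k x)"
    using block_cols[OF e cl cm relmu] unfolding tt_def .
  have mumono: "tt mu l x \<le> tt mu l (Suc x)" if l: "l < r" and x: "Suc x < e" for l x
  proof (cases "l = j")
    case True thus ?thesis using rq[OF mR l x] j by simp
  next
    case False
    define mu' where "mu' = mu[j := mkp e (tt mu j) 0, l := mkp e (tt mu l) (nat (ww mu j + ww mu l))]"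
    have Pj: "\<forall>x<e. eta_t e (mkp e (tt mu j) 0) (s ! j) x = tt mu j x" "weight e (mkp e (tt mu j) 0) (s ! j) = 0"
      "is_partition (mkp e (tt mu j) 0)"
      using mkp_at[OF e rowsum[OF cm j(1)]] by auto
    have Pl: "\<forall>x<e. eta_t e (mkp e (tt mu l) (nat (ww mu j + ww mu l))) (s ! l) x = tt mu l x"
      "weight e (mkp e (tt mu l) (nat (ww mu j + ww mu l))) (s ! l) = nat (ww mu j + ww mu l)"
      "is_partition (mkp e (tt mu l) (nat (ww mu j + ww mu l)))"
      using mkp_at[OF e rowsum[OF cm l]] by auto
    have nth': "mu' ! q = (if q = l then mkp e (tt mu l) (nat (ww mu j + ww mu l)) else if q = j then mkp e (tt mu j) 0 else mu ! q)"
      if "q < r" for q using that lenm False unfolding mu'_def by (auto simp: nth_list_update)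
    have cm': "(mu', s) \<in> configs r" unfolding mu'_def by (rule configs_upd2[OF cm j(1) l Pj(3) Pl(3)])
    have ttm: "tt mu' q x = tt mu q x" if "q < r" "x < e" for q x
      using nth'[OF that(1)] Pj Pl that unfolding tt_def by auto
    have wwm: "ww mu' q = (if q = l then ww mu j + ww mu l else if q = j then 0 else ww mu q)" if "q < r" for q
      using nth'[OF that] Pj Pl that unfolding ww_def by auto
    have "((mu, s), (mu', s)) \<in> block_rel e r"
    proof (rule block_rel_suff[OF e cm cm'])
      show "\<forall>x<e. (\<Sum>k<r. eta_t e (mu ! k) (s ! k) x) = (\<Sum>k<r. eta_t e (mu' ! k) (s ! k) x)"
        using ttm unfolding tt_def by simp
      define G where "G lm k = 2 * ww lm k + (\<Sum>x<e. tt lm k x * tt lm k x - tt lm k x)" for lm k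
      have "(\<Sum>k<r. G mu' k) = (\<Sum>k<r. G mu k) + (G mu' j - G mu j) + (G mu' l - G mu l)"
        by (rule two_row) (use ttm wwm False j l in \<open>auto simp: G_def\<close>)
      moreover have "G mu' j - G mu j = - 2 * ww mu j" using ttm wwm j False unfolding G_def by simp
      moreover have "G mu' l - G mu l = 2 * ww mu j" using ttm wwm l False unfolding G_def by simp
      ultimately have "(\<Sum>k<r. G mu' k) = (\<Sum>k<r. G mu k)" by simp
      thus "(\<Sum>k<r. 2 * int (weight e (mu ! k) (s ! k)) + (\<Sum>x<e. eta_t e (mu ! k) (s ! k) x * eta_t e (mu ! k) (s ! k) x - eta_t e (mu ! k) (s ! k) x)) =
            (\<Sum>k<r. 2 * int (weight e (mu' ! k) (s ! k)) + (\<Sum>x<e. eta_t e (mu' ! k) (s ! k) x * eta_t e (mu' ! k) (s ! k) x - eta_t e (mu' ! k) (s ! k) x))"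
        unfolding G_def tt_def ww_def by simp
    qed
    hence mR': "(mu', s) \<in> R" using R_closed[OF RB mR] by blast
    have "ww mu' l \<le> tt mu' l (Suc x) - tt mu' l x + 1" using rq[OF mR' l x] .
    moreover have "ww mu' l \<ge> 1" using wwm[OF l] j unfolding ww_def by simp
    ultimately show ?thesis using ttm[OF l] x by simp
  qed
  have mumono2: "tt mu l x \<le> tt mu l x'" if "l < r" "x \<le> x'" "x' < e" for l x x'
    using telescope[of e "tt mu l" 0 x x'] mumono[OF that(1)] that by simp
  show ?thesis
  proof (intro allI impI, elim conjE)
    fix k i i' assume k: "k < r" and ii: "i < i'" "i' \<le> e - 1"
    have i'e: "i' < e" using ii e by simp
    show "eta_t e (lams ! k) (s ! k) i' - eta_t e (lams ! k) (s ! k) i \<ge> -1"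
    proof (rule ccontr)
      assume "\<not> eta_t e (lams ! k) (s ! k) i' - eta_t e (lams ! k) (s ! k) i \<ge> -1"
      hence neg: "tt lams k i' - tt lams k i \<le> -2" unfolding tt_def by simp
      have wnn: "ww lm q \<ge> 0" for lm q unfolding ww_def by simp
      have gap: "tt lams q x - 1 \<le> tt lams q (Suc x)" if "q < r" "Suc x < e" for q x
        using rq[OF LR that] wnn[of lams q] by simp
      have i2: "Suc i < i'"
      proof (rule ccontr)
        assume "\<not> Suc i < i'"
        hence "i' = Suc i" using ii by simp
        thus False using gap[OF k, of i] neg i'e by simp
      qed
      have "(\<Sum>q<r. tt lams q i' - tt lams q i) = (\<Sum>q<r. tt mu q i' - tt mu q i)"
        using cols i'e ii by (simp add: sum_subtractf)
      also have "\<dots> \<ge> 0" using mumono2 ii i'e by (intro sum_nonneg) simp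
      finally have sum0: "(\<Sum>q<r. tt lams q i' - tt lams q i) \<ge> 0" .
      obtain m where m: "m < r" "m \<noteq> k" "tt lams m i' - tt lams m i \<ge> 1"
      proof (rule ccontr)
        assume "\<not> thesis"
        hence le0: "\<forall>q\<in>{..<r} - {k}. tt lams q i' - tt lams q i \<le> 0" using that by force
        have "(\<Sum>q<r. tt lams q i' - tt lams q i) = (tt lams k i' - tt lams k i) + (\<Sum>q\<in>{..<r} - {k}. tt lams q i' - tt lams q i)"
          using k by (simp add: sum.remove)
        also have "(\<Sum>q\<in>{..<r} - {k}. tt lams q i' - tt lams q i) \<le> 0" using le0 by (intro sum_nonpos) simp
        finally show False using sum0 neg by simp
      qed
      define d where "d = tt lams m i' - tt lams m i"
      define A where "A = tt lams k i - tt lams k i'"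
      have A2: "A \<ge> 2" using neg unfolding A_def by simp
      have d1: "d \<ge> 1" using m unfolding d_def by simp
      define W2 where "W2 = ww lams k + ww lams m + (A - 2 + d)"
      have W2d: "W2 \<ge> d" using A2 wnn[of lams k] wnn[of lams m] unfolding W2_def by simp
      have iine: "i \<noteq> i'" using ii by simp
      have ie: "i < e" using ii i'e by simp
      define fk where "fk x = tt lams k x + 1 * dl i i' x" for x
      define fm where "fm x = tt lams m x + (-1) * dl i i' x" for x
      have sfk: "(\<Sum>x<e. fk x) = s ! k" unfolding fk_def using dl_sums(1)[OF ie i'e iine, of 1 "tt lams k"] rowsum[OF cl k] by simp
      have sfm: "(\<Sum>x<e. fm x) = s ! m" unfolding fm_def using dl_sums(1)[OF ie i'e iine, of "-1" "tt lams m"] rowsum[OF cl m(1)] by simp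
      define nu where "nu = lams[k := mkp e fk 0, m := mkp e fm (nat W2)]"
      have Pk: "\<forall>x<e. eta_t e (mkp e fk 0) (s ! k) x = fk x" "weight e (mkp e fk 0) (s ! k) = 0"
        "is_partition (mkp e fk 0)" using mkp_at[OF e sfk] by auto
      have Pm: "\<forall>x<e. eta_t e (mkp e fm (nat W2)) (s ! m) x = fm x" "weight e (mkp e fm (nat W2)) (s ! m) = nat W2"
        "is_partition (mkp e fm (nat W2))" using mkp_at[OF e sfm] by auto
      have nth': "nu ! q = (if q = m then mkp e fm (nat W2) else if q = k then mkp e fk 0 else lams ! q)"
        if "q < r" for q using that lenl m k unfolding nu_def by (auto simp: nth_list_update)
      have cn: "(nu, s) \<in> configs r" unfolding nu_def by (rule configs_upd2[OF cl k m(1) Pk(3) Pm(3)])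
      have ttn: "tt nu q x = (if q = m then fm x else if q = k then fk x else tt lams q x)" if "q < r" "x < e" for q x
        using nth'[OF that(1)] Pk Pm that unfolding tt_def by auto
      have wwn: "ww nu q = (if q = m then W2 else if q = k then 0 else ww lams q)" if "q < r" for q
        using nth'[OF that] Pk Pm that d1 W2d unfolding ww_def by auto
      have "((lams, s), (nu, s)) \<in> block_rel e r"
      proof (rule block_rel_suff[OF e cl cn])
        have "(\<Sum>q<r. tt nu q x) = (\<Sum>q<r. tt lams q x)" if x: "x < e" for x
        proof -
          have "(\<Sum>q<r. tt nu q x) = (\<Sum>q<r. tt lams q x) + (tt nu k x - tt lams k x) + (tt nu m x - tt lams m x)"
            by (rule two_row) (use ttn x m k in auto)
          thus ?thesis using ttn[OF k x] ttn[OF m(1) x] m unfolding fk_def fm_def by simp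
        qed
        thus "\<forall>x<e. (\<Sum>q<r. eta_t e (lams ! q) (s ! q) x) = (\<Sum>q<r. eta_t e (nu ! q) (s ! q) x)"
          unfolding tt_def by simp
        define G where "G lm q = 2 * ww lm q + (\<Sum>x<e. tt lm q x * tt lm q x - tt lm q x)" for lm q
        have "(\<Sum>q<r. G nu q) = (\<Sum>q<r. G lams q) + (G nu k - G lams k) + (G nu m - G lams m)"
          by (rule two_row) (use ttn wwn m k in \<open>auto simp: G_def\<close>)
        moreover have "G nu k - G lams k = - 2 * ww lams k - 2 * A + 2"
        proof -
          have "G nu k = 0 + (\<Sum>x<e. fk x * fk x - fk x)" unfolding G_def using ttn[OF k] wwn[OF k] m by simp
          also have "(\<Sum>x<e. fk x * fk x - fk x) = (\<Sum>x<e. tt lams k x * tt lams k x - tt lams k x) + 2 * 1 * (tt lams k i' - tt lams k i) + 2"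
            unfolding fk_def by (rule dl_sums(2)[OF ie i'e iine]) simp
          finally show ?thesis unfolding G_def A_def by simp
        qed
        moreover have "G nu m - G lams m = 2 * ww lams k + 2 * A - 2"
        proof -
          have "G nu m = 2 * W2 + (\<Sum>x<e. fm x * fm x - fm x)" unfolding G_def using ttn[OF m(1)] wwn[OF m(1)] by simp
          also have "(\<Sum>x<e. fm x * fm x - fm x) = (\<Sum>x<e. tt lams m x * tt lams m x - tt lams m x) + 2 * (-1) * (tt lams m i' - tt lams m i) + 2"
            unfolding fm_def by (rule dl_sums(2)[OF ie i'e iine]) simp
          finally show ?thesis unfolding G_def W2_def d_def by simp
        qed
        ultimately have "(\<Sum>q<r. G nu q) = (\<Sum>q<r. G lams q)" by simp
        thus "(\<Sum>k<r. 2 * int (weight e (lams ! k) (s ! k)) + (\<Sum>x<e. eta_t e (lams ! k) (s ! k) x * eta_t e (lams ! k) (s ! k) x - eta_t e (lams ! k) (s ! k) x)) =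
            (\<Sum>k<r. 2 * int (weight e (nu ! k) (s ! k)) + (\<Sum>x<e. eta_t e (nu ! k) (s ! k) x * eta_t e (nu ! k) (s ! k) x - eta_t e (nu ! k) (s ! k) x))"
          unfolding G_def tt_def ww_def by simp
      qed
      hence nR: "(nu, s) \<in> R" using R_closed[OF RB LR] by blast
      have stepm: "fm x + (W2 - 1) \<le> fm (Suc x)" if "Suc x < e" for x
        using rq[OF nR m(1) that] ttn[OF m(1), of x] ttn[OF m(1), of "Suc x"] wwn[OF m(1)] that by simp
      have tel: "fm i + int (i' - i) * (W2 - 1) \<le> fm i'"
        using telescope[of e fm "W2 - 1" i i'] stepm ii i'e by simp
      have "fm i' - fm i = d - 2" unfolding fm_def dl_def d_def using iine by simp
      moreover have "int (i' - i) * (W2 - 1) \<ge> 2 * (W2 - 1)"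
        using i2 W2d d1 by (intro mult_right_mono) auto
      ultimately have "d - 2 \<ge> 2 * (W2 - 1)" using tel by simp
      thus False using W2d d1 by simp
    qed
  qed
qed


end
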